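(* As formal power series in $x$, $$F(u,1,x):=\sum_{n\ge1}\frac{x^n}{n!}\sum_{p=1}^n\sum_{\pi\in\mathfrak S_n}u^{\chi_n(\pi,p)}=\frac{u}{2-u}\Bigl[(1-x)^{-2}-(1-x)^{-u}\Bigr],$$ and $$G(u,x):=\sum_{n\ge1}\frac{x^n}{n!}\sum_{\pi\in\mathfrak S_n}u^{\chi_n(\pi,n)}=\frac{u^2}{2-u}\Bigl[\frac1{1-x}+\frac{(1-x)^{1-u}}{1-u}\Bigr]-\frac{u^2}{1-u}-u\log(1-x).$$
   Context: $[n]=\{1,\dots,n\}$, $\mathfrak S_n$ the symmetric group on $[n]$, right action $i\pi$, products composed left to right; $\tau(i,j)$ the transposition exchanging $i,j$ ($\tau(n,n)$ the identity). For $\pi\in\mathfrak S_n$ let $q(\pi)=n\pi^{-1}$, and for $n\ge2$ let $\downarrow\pi\in\mathfrak S_{n-1}$ be the restriction to $[n-1]$ of $\tau(n,q(\pi))\pi$. The "number of moves" function $\chi_n(\pi,p)$, $\pi\in\mathfrak S_n$, $p\in[n]$, is defined recursively: $\chi_1(\mathrm{id},1)=1$; for $n\ge2$, with $q=q(\pi)$: $\chi_n(\pi,p)=\chi_{n-1}(\downarrow\pi,p)$ if $p\ne n,p\ne q$; $=1+\chi_{n-1}(\downarrow\pi,q)$ if $p=n\ne q$; $=1$ if $p=q\ne n$; $=1$ if $p=q=n$. Coefficients are rational functions of $u$; $(1-x)^{-u}$ and $(1-x)^{1-u}$ denote the binomial series. *)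

theory Defs
  imports "HOL-Combinatorics.Combinatorics" "HOL-Computational_Algebra.Formal_Power_Series"
begin

text \<open>Permutations of [n] are functions nat to nat that permute {1..n}.
 Right action: i\<pi> is written pi i; the left-to-right product tau pi maps i to pi (tau i),
 i.e. the function pi o tau.\<close>

definition qpos :: "nat \<Rightarrow> (nat \<Rightarrow> nat) \<Rightarrow> nat" where
  "qpos n \<pi> = inv \<pi> n"

definition down :: "nat \<Rightarrow> (nat \<Rightarrow> nat) \<Rightarrow> (nat \<Rightarrow> nat)" where
  "down n \<pi> = \<pi> \<circ> Transposition.transpose n (qpos n \<pi>)"

fun chi :: "nat \<Rightarrow> (nat \<Rightarrow> nat) \<Rightarrow> nat \<Rightarrow> nat" where
  "chi 0 \<pi> p = 1"
| "chi (Suc 0) \<pi> p = 1"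
| "chi (Suc (Suc m)) \<pi> p =
     (let n = Suc (Suc m); q = qpos n \<pi>; d = down n \<pi> in
      if p \<noteq> n \<and> p \<noteq> q then chi (Suc m) d p
      else if p = n \<and> p \<noteq> q then 1 + chi (Suc m) d q
      else 1)"

definition perms :: "nat \<Rightarrow> (nat \<Rightarrow> nat) set" where
  "perms n = {\<pi>. \<pi> permutes {1..n}}"

definition binser :: "'a::field_char_0 \<Rightarrow> 'a fps" where
  "binser a = fps_binomial a oo (- fps_X)"

definition Fser :: "'a::field_char_0 \<Rightarrow> 'a fps" where
  "Fser u = Abs_fps (\<lambda>n. if n = 0 then 0 else
     (\<Sum>p\<in>{1..n}. \<Sum>\<pi>\<in>perms n. u ^ chi n \<pi> p) / fact n)"

definition Gser :: "'a::field_char_0 \<Rightarrow> 'a fps" where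
  "Gser u = Abs_fps (\<lambda>n. if n = 0 then 0 else
     (\<Sum>\<pi>\<in>perms n. u ^ chi n \<pi> n) / fact n)"

end

theory Submission
  imports Defs
begin

lemma binser_nth: "fps_nth (binser (a::'a::field_char_0)) n = pochhammer (-a) n / fact n"
  unfolding binser_def fps_compose_uminus'
  by (simp add: fps_binomial_def gbinomial_pochhammer power_mult_distrib[symmetric])

lemma inv_nth: "fps_nth (inverse (1 - fps_X :: 'a::field_char_0 fps)) n = 1"
  by (simp add: fps_inverse_one_minus_fps_X)

lemma ln_nth: "fps_nth (fps_ln (1::'a::field_char_0) oo (- fps_X)) n = (if n = 0 then 0 else - 1 / of_nat n)"
proof (cases n)
  case (Suc m)
  then show ?thesis unfolding fps_compose_uminus' by (simp add: fps_ln_nth)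
qed (simp add: fps_compose_uminus')

lemma perm_sum:
  "(\<Sum>\<pi>\<in>perms (Suc n). f \<pi>) = (\<Sum>b\<in>{1..Suc n}. \<Sum>\<sigma>\<in>perms n. f (\<sigma> \<circ> Transposition.transpose (Suc n) b))"
proof -
  have ins: "{1..Suc n} = insert (Suc n) {1..n}" by auto
  have "(\<Sum>\<pi>\<in>perms (Suc n). f \<pi>) = (\<Sum>\<pi>\<in>perms (Suc n). f (inv \<pi>))"
    unfolding perms_def by (rule sum_permutations_inverse)
  also have "\<dots> = (\<Sum>b\<in>{1..Suc n}. \<Sum>q\<in>perms n. f (inv (Transposition.transpose (Suc n) b \<circ> q)))"
    unfolding perms_def ins by (rule sum_over_permutations_insert) auto
  also have "\<dots> = (\<Sum>b\<in>{1..Suc n}. \<Sum>q\<in>perms n. f (inv q \<circ> Transposition.transpose (Suc n) b))"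
  proof -
    have "inv (Transposition.transpose (Suc n) b \<circ> q) = inv q \<circ> Transposition.transpose (Suc n) b"
      if "q \<in> perms n" for b q
    proof -
      have "bij q" using that unfolding perms_def using permutes_bij by blast
      then show ?thesis by (simp add: o_inv_distrib)
    qed
    then show ?thesis by (intro sum.cong refl) simp
  qed
  also have "\<dots> = (\<Sum>b\<in>{1..Suc n}. \<Sum>\<sigma>\<in>perms n. f (\<sigma> \<circ> Transposition.transpose (Suc n) b))"
  proof (rule sum.cong[OF refl])
    fix b
    show "(\<Sum>q\<in>perms n. f (inv q \<circ> Transposition.transpose (Suc n) b)) = (\<Sum>\<sigma>\<in>perms n. f (\<sigma> \<circ> Transposition.transpose (Suc n) b))"
      unfolding perms_def by (rule sum_permutations_inverse[symmetric])
  qed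
  finally show ?thesis .
qed

lemma qd:
  assumes "\<sigma> \<in> perms n" "b \<in> {1..Suc n}"
  shows "qpos (Suc n) (\<sigma> \<circ> Transposition.transpose (Suc n) b) = b"
    "down (Suc n) (\<sigma> \<circ> Transposition.transpose (Suc n) b) = \<sigma>"
proof -
  have p: "\<sigma> permutes {1..n}" using assms unfolding perms_def by simp
  have "bij (\<sigma> \<circ> Transposition.transpose (Suc n) b)"
    using permutes_bij[OF p] by (simp add: bij_comp)
  moreover have "(\<sigma> \<circ> Transposition.transpose (Suc n) b) b = Suc n"
    using permutes_not_in[OF p, of "Suc n"] by simp
  ultimately have "inv (\<sigma> \<circ> Transposition.transpose (Suc n) b) (Suc n) = b"
    using inv_f_eq bij_is_inj by metis
  then show q: "qpos (Suc n) (\<sigma> \<circ> Transposition.transpose (Suc n) b) = b"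
    unfolding qpos_def .
  show "down (Suc n) (\<sigma> \<circ> Transposition.transpose (Suc n) b) = \<sigma>"
    unfolding down_def q by (simp add: comp_assoc)
qed

definition AA :: "'a::field_char_0 \<Rightarrow> nat \<Rightarrow> nat \<Rightarrow> 'a" where
  "AA u n p = (\<Sum>\<pi>\<in>perms n. u ^ chi n \<pi> p)"

definition BB :: "'a::field_char_0 \<Rightarrow> nat \<Rightarrow> 'a" where
  "BB u n = (\<Sum>p\<in>{1..n}. AA u n p)"

lemma card_perms: "card (perms n) = fact n"
  unfolding perms_def by (rule card_permutations) auto

lemma finite_perms: "finite (perms n)"
  unfolding perms_def by (rule finite_permutations) auto

lemma chi_step:
  assumes "\<sigma> \<in> perms (Suc m)" "b \<in> {1..Suc (Suc m)}"
  shows "chi (Suc (Suc m)) (\<sigma> \<circ> Transposition.transpose (Suc (Suc m)) b) p =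
    (if p \<noteq> Suc (Suc m) \<and> p \<noteq> b then chi (Suc m) \<sigma> p
     else if p = Suc (Suc m) \<and> p \<noteq> b then 1 + chi (Suc m) \<sigma> b else 1)"
  using qd[OF assms] by (simp only: chi.simps(3) Let_def)

lemma sum_if_eq:
  assumes "finite S" "p \<in> S"
  shows "(\<Sum>b\<in>S. if b = p then X else Y) = X + of_nat (card S - 1) * (Y::'a::field_char_0)"
proof -
  have "(\<Sum>b\<in>S. if b = p then X else Y) = X + (\<Sum>b\<in>S - {p}. if b = p then X else Y)"
    using assms by (simp add: sum.remove)
  also have "(\<Sum>b\<in>S - {p}. if b = p then X else Y) = (\<Sum>b\<in>S - {p}. Y)"
    by (rule sum.cong) auto
  finally show ?thesis using assms by simp
qed

lemma AA_one: "AA u (Suc 0) p = u"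
proof -
  have "AA u (Suc 0) p = (\<Sum>\<pi>\<in>perms (Suc 0). u)" unfolding AA_def by simp
  also have "\<dots> = u" using card_perms[of "Suc 0"] by simp
  finally show ?thesis .
qed

lemma AA_rec1:
  assumes "p \<in> {1..Suc m}"
  shows "AA u (Suc (Suc m)) p = u * fact (Suc m) + of_nat (Suc m) * AA u (Suc m) p"
proof -
  have "AA u (Suc (Suc m)) p = (\<Sum>b\<in>{1..Suc (Suc m)}. \<Sum>\<sigma>\<in>perms (Suc m).
      u ^ chi (Suc (Suc m)) (\<sigma> \<circ> Transposition.transpose (Suc (Suc m)) b) p)"
    unfolding AA_def by (rule perm_sum)
  also have "\<dots> = (\<Sum>b\<in>{1..Suc (Suc m)}. if b = p then u * fact (Suc m) else AA u (Suc m) p)"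
  proof (rule sum.cong[OF refl])
    fix b assume b: "b \<in> {1..Suc (Suc m)}"
    have "(\<Sum>\<sigma>\<in>perms (Suc m). u ^ chi (Suc (Suc m)) (\<sigma> \<circ> Transposition.transpose (Suc (Suc m)) b) p)
        = (\<Sum>\<sigma>\<in>perms (Suc m). if b = p then u else u ^ chi (Suc m) \<sigma> p)"
      using assms by (intro sum.cong refl) (simp add: chi_step[OF _ b] del: chi.simps)
    also have "\<dots> = (if b = p then u * fact (Suc m) else AA u (Suc m) p)"
      by (simp add: AA_def card_perms algebra_simps)
    finally show "(\<Sum>\<sigma>\<in>perms (Suc m). u ^ chi (Suc (Suc m)) (\<sigma> \<circ> Transposition.transpose (Suc (Suc m)) b) p)
        = (if b = p then u * fact (Suc m) else AA u (Suc m) p)" .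
  qed
  also have "\<dots> = u * fact (Suc m) + of_nat (Suc m) * AA u (Suc m) p"
    using assms by (subst sum_if_eq) auto
  finally show ?thesis .
qed

lemma AA_rec2:
  "AA u (Suc (Suc m)) (Suc (Suc m)) = u * fact (Suc m) + u * (\<Sum>b\<in>{1..Suc m}. AA u (Suc m) b)"
proof -
  have "AA u (Suc (Suc m)) (Suc (Suc m)) = (\<Sum>b\<in>{1..Suc (Suc m)}. \<Sum>\<sigma>\<in>perms (Suc m).
      u ^ chi (Suc (Suc m)) (\<sigma> \<circ> Transposition.transpose (Suc (Suc m)) b) (Suc (Suc m)))"
    unfolding AA_def by (rule perm_sum)
  also have "\<dots> = (\<Sum>b\<in>{1..Suc (Suc m)}. if b = Suc (Suc m) then u * fact (Suc m) else u * AA u (Suc m) b)"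
  proof (rule sum.cong[OF refl])
    fix b assume b: "b \<in> {1..Suc (Suc m)}"
    have "(\<Sum>\<sigma>\<in>perms (Suc m). u ^ chi (Suc (Suc m)) (\<sigma> \<circ> Transposition.transpose (Suc (Suc m)) b) (Suc (Suc m)))
        = (\<Sum>\<sigma>\<in>perms (Suc m). if b = Suc (Suc m) then u else u * u ^ chi (Suc m) \<sigma> b)"
      by (intro sum.cong refl) (simp add: chi_step[OF _ b] del: chi.simps)
    also have "\<dots> = (if b = Suc (Suc m) then u * fact (Suc m) else u * AA u (Suc m) b)"
      by (simp add: AA_def card_perms sum_distrib_left algebra_simps)
    finally show "(\<Sum>\<sigma>\<in>perms (Suc m). u ^ chi (Suc (Suc m)) (\<sigma> \<circ> Transposition.transpose (Suc (Suc m)) b) (Suc (Suc m)))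
        = (if b = Suc (Suc m) then u * fact (Suc m) else u * AA u (Suc m) b)" .
  qed
  also have "\<dots> = u * fact (Suc m) + (\<Sum>b\<in>{1..Suc m}. u * AA u (Suc m) b)"
  proof -
    have i: "{1..Suc (Suc m)} = insert (Suc (Suc m)) {1..Suc m}" by auto
    have "(\<Sum>b\<in>{1..Suc m}. if b = Suc (Suc m) then u * fact (Suc m) else u * AA u (Suc m) b)
       = (\<Sum>b\<in>{1..Suc m}. u * AA u (Suc m) b)" by (rule sum.cong) auto
    then show ?thesis unfolding i by simp
  qed
  finally show ?thesis by (simp only: sum_distrib_left)
qed

lemma BB_rec: "BB u (Suc n) = (of_nat n + u) * BB u n + u * fact (Suc n)"
proof (cases n)
  case 0
  then show ?thesis by (simp add: BB_def AA_one)
next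
  case (Suc m)
  have i: "{1..Suc (Suc m)} = insert (Suc (Suc m)) {1..Suc m}" by auto
  have "BB u (Suc (Suc m)) = (\<Sum>p\<in>{1..Suc m}. AA u (Suc (Suc m)) p) + AA u (Suc (Suc m)) (Suc (Suc m))"
    unfolding BB_def i by simp
  also have "(\<Sum>p\<in>{1..Suc m}. AA u (Suc (Suc m)) p) = (\<Sum>p\<in>{1..Suc m}. u * fact (Suc m) + of_nat (Suc m) * AA u (Suc m) p)"
    by (rule sum.cong) (auto simp: AA_rec1)
  also have "\<dots> = of_nat (Suc m) * (u * fact (Suc m)) + of_nat (Suc m) * BB u (Suc m)"
    by (simp only: sum.distrib BB_def sum_distrib_left sum_constant card_atLeastAtMost) (simp add: algebra_simps)
  finally show ?thesis unfolding Suc AA_rec2 BB_def[symmetric]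
    by (simp add: algebra_simps)
qed

lemma GG_rec: "AA u (Suc n) (Suc n) = u * BB u n + u * fact n"
proof (cases n)
  case 0
  then show ?thesis by (simp add: BB_def AA_one)
next
  case (Suc m)
  then show ?thesis by (simp add: AA_rec2 BB_def algebra_simps)
qed

lemma BB_closed:
  assumes "u \<noteq> (2::'a::field_char_0)"
  shows "BB u n = u / (2 - u) * (fact (Suc n) - pochhammer u n)"
proof (induction n)
  case 0
  then show ?case by (simp add: BB_def)
next
  case (Suc n)
  have d: "2 - u \<noteq> 0" using assms by simp
  show ?case unfolding BB_rec Suc pochhammer_rec' fact_Suc[of "Suc n"]
    using d by (simp add: field_simps)
qed

lemma poch2: "pochhammer (2::'a::field_char_0) n = fact (Suc n)"
proof -
  have "pochhammer (1::'a) (Suc n) = pochhammer 2 n"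
    by (simp add: pochhammer_rec one_add_one)
  then show ?thesis by (simp add: pochhammer_fact)
qed

lemma Fser_nth: "fps_nth (Fser u) n = (if n = 0 then 0 else BB u n / fact n)"
  by (simp add: Fser_def BB_def AA_def)

lemma Gser_nth: "fps_nth (Gser u) n = (if n = 0 then 0 else AA u n n / fact n)"
  by (simp add: Gser_def AA_def)

theorem mainTheorem8:
  fixes u :: "'a::field_char_0"
  assumes "u \<noteq> 2"
  shows "Fser u = fps_const (u / (2 - u)) * (binser (-2) - binser (-u)) \<and>
         (u \<noteq> 1 \<longrightarrow>
          Gser u = fps_const (u^2 / (2 - u)) * (inverse (1 - fps_X) + fps_const (1 / (1 - u)) * binser (1 - u))
                   - fps_const (u^2 / (1 - u)) - fps_const u * (fps_ln 1 oo (- fps_X)))"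
proof
  have d: "2 - u \<noteq> 0" using assms by simp
  show "Fser u = fps_const (u / (2 - u)) * (binser (-2) - binser (-u))"
  proof (rule fps_ext)
    fix n
    show "fps_nth (Fser u) n = fps_nth (fps_const (u / (2 - u)) * (binser (-2) - binser (-u))) n"
    proof (cases n)
      case 0
      then show ?thesis by (simp add: Fser_nth binser_nth)
    next
      case (Suc k)
      have f: "(fact n :: 'a) \<noteq> 0" by simp
      have r: "fps_nth (fps_const (u / (2 - u)) * (binser (-2) - binser (-u))) n
          = u / (2 - u) * (fact (Suc n) / fact n - pochhammer u n / fact n)"
        by (simp add: binser_nth poch2)
      have l: "fps_nth (Fser u) n = u / (2 - u) * (fact (Suc n) / fact n - pochhammer u n / fact n)"
      proof -
        have "n \<noteq> 0" using Suc by simp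
        then have "fps_nth (Fser u) n = u / (2 - u) * (fact (Suc n) - pochhammer u n) / fact n"
          unfolding Fser_nth BB_closed[OF assms] by simp
        also have "\<dots> = u / (2 - u) * (fact (Suc n) / fact n - pochhammer u n / fact n)"
          by (simp only: diff_divide_distrib times_divide_eq_right[symmetric])
        finally show ?thesis .
      qed
      show ?thesis unfolding l r ..
    qed
  qed
  show "u \<noteq> 1 \<longrightarrow>
          Gser u = fps_const (u^2 / (2 - u)) * (inverse (1 - fps_X) + fps_const (1 / (1 - u)) * binser (1 - u))
                   - fps_const (u^2 / (1 - u)) - fps_const u * (fps_ln 1 oo (- fps_X))"
  proof
    assume u1: "u \<noteq> 1"
    have d1: "1 - u \<noteq> 0" using u1 by simp
    show "Gser u = fps_const (u^2 / (2 - u)) * (inverse (1 - fps_X) + fps_const (1 / (1 - u)) * binser (1 - u))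
                   - fps_const (u^2 / (1 - u)) - fps_const u * (fps_ln 1 oo (- fps_X))"
    proof (rule fps_ext)
      fix n
      show "fps_nth (Gser u) n = fps_nth (fps_const (u^2 / (2 - u)) * (inverse (1 - fps_X) + fps_const (1 / (1 - u)) * binser (1 - u))
                   - fps_const (u^2 / (1 - u)) - fps_const u * (fps_ln 1 oo (- fps_X))) n"
      proof (cases n)
        case 0
        have e1: "1 + 1 / (1 - u) = (2 - u) / (1 - u)" using d1 by (simp add: field_simps)
        have e: "u^2 / (2 - u) * (1 + 1 / (1 - u)) = u^2 / (1 - u)"
          unfolding e1 using d d1 by simp
        show ?thesis using 0 e by (simp add: Gser_nth binser_nth inv_nth ln_nth)
      next
        case (Suc k)
        have f: "(fact k :: 'a) \<noteq> 0" by simp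
        have p: "pochhammer (u - 1) (Suc k) = (u - 1) * pochhammer u k"
          by (simp add: pochhammer_rec)
        let ?T = "u^2 / (2 - u) * (1 - pochhammer u k / fact (Suc k)) + u / of_nat (Suc k)"
        have r0: "fps_nth (fps_const (u^2 / (2 - u)) * (inverse (1 - fps_X) + fps_const (1 / (1 - u)) * binser (1 - u))
                   - fps_const (u^2 / (1 - u)) - fps_const u * (fps_ln 1 oo (- fps_X))) (Suc k)
           = u^2 / (2 - u) * (1 + 1 / (1 - u) * ((u - 1) * pochhammer u k / fact (Suc k))) - u * (- 1 / of_nat (Suc k))"
          by (simp only: fps_sub_nth fps_add_nth fps_mult_left_const_nth inv_nth ln_nth binser_nth p
              fps_nth_fps_const minus_diff_eq) simp
        have q: "1 / (1 - u) * ((u - 1) * pochhammer u k / fact (Suc k)) = - (pochhammer u k / fact (Suc k))"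
        proof -
          have "1 / (1 - u) * (u - 1) = (-1::'a)" using d1 by (simp add: field_simps)
          then show ?thesis by (metis mult.assoc times_divide_eq_right mult_minus1)
        qed
        have r: "fps_nth (fps_const (u^2 / (2 - u)) * (inverse (1 - fps_X) + fps_const (1 / (1 - u)) * binser (1 - u))
                   - fps_const (u^2 / (1 - u)) - fps_const u * (fps_ln 1 oo (- fps_X))) (Suc k) = ?T"
          unfolding r0 q by simp
        have fk: "(fact (Suc k) :: 'a) = of_nat (Suc k) * fact k" by simp
        have l0: "fps_nth (Gser u) (Suc k) = (u * (u / (2 - u) * (fact (Suc k) - pochhammer u k)) + u * fact k) / fact (Suc k)"
          by (simp only: Gser_nth GG_rec BB_closed[OF assms]) simp
        have l: "fps_nth (Gser u) (Suc k) = ?T"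
          unfolding l0 add_divide_distrib
        proof -
          have a: "u * (u / (2 - u) * (fact (Suc k) - pochhammer u k)) / fact (Suc k)
              = u^2 / (2 - u) * (1 - pochhammer u k / fact (Suc k))"
          proof -
            have g: "u * (u / (2 - u) * (F - P)) / F = u^2 / (2 - u) * (1 - P / F)"
              if "F \<noteq> 0" for F P :: 'a
              using that d by (simp add: field_simps power2_eq_square)
            show ?thesis by (rule g) (rule fact_nonzero)
          qed
          have b: "u * fact k / fact (Suc k) = u / of_nat (Suc k)"
            unfolding fk using f by (simp add: field_simps del: of_nat_Suc)
          show "u * (u / (2 - u) * (fact (Suc k) - pochhammer u k)) / fact (Suc k) + u * fact k / fact (Suc k) = ?T"
            unfolding a b ..
        qed
        show ?thesis unfolding Suc l r ..
      qed
    qed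
  qed
qed

end
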